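(* Let $A=(a_{i,k})_{0\le i,k\le d-1}\in\mathbb{Z}^{d\times d}$ be a reduced idealizing matrix. Then the number of vectors $\beta\in\mathbb{Z}^d$ such that the $(d+1)\times(d+1)$ matrix $$\tilde A=\begin{pmatrix}A&\beta\\0&1\end{pmatrix}$$ is a reduced idealizing matrix equals $a_{d-1,d-1}^{\,d}$.
   Context: An idealizing matrix is an upper triangular integer matrix $A=(a_{i,k})_{0\le i,k\le d-1}$ with nonzero diagonal entries such that, for each $0\le j\le d-2$, the vector obtained by shifting the $j$-th column down by one, namely $(0,a_{0,j},a_{1,j},\dots,a_{d-2,j})^T$, lies in the $\mathbb{Z}$-span of columns $0,1,\dots,j+1$ of $A$. It is called reduced if its diagonal entries are positive and, in every row $i$, the entries $a_{i,k}$ with $k>i$ satisfy $0\le a_{i,k}\le a_{i,i}-1$. *)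

theory Defs
  imports Main
begin

text \<open>A d x d integer matrix is represented as a function nat => nat => int;
  only the entries with indices below d are relevant.\<close>

definition idealizing :: "nat \<Rightarrow> (nat \<Rightarrow> nat \<Rightarrow> int) \<Rightarrow> bool" where
  "idealizing d A \<longleftrightarrow>
     (\<forall>i<d. \<forall>k<d. k < i \<longrightarrow> A i k = 0) \<and>
     (\<forall>i<d. A i i \<noteq> 0) \<and>
     (\<forall>j. j + 1 < d \<longrightarrow>
        (\<exists>c :: nat \<Rightarrow> int. \<forall>r<d.
           (if r = 0 then 0 else A (r - 1) j) = (\<Sum>k\<le>j+1. c k * A r k)))"

definition reduced_idealizing :: "nat \<Rightarrow> (nat \<Rightarrow> nat \<Rightarrow> int) \<Rightarrow> bool" where
  "reduced_idealizing d A \<longleftrightarrow>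
     idealizing d A \<and>
     (\<forall>i<d. A i i > 0) \<and>
     (\<forall>i<d. \<forall>k<d. i < k \<longrightarrow> 0 \<le> A i k \<and> A i k \<le> A i i - 1)"

definition extend_mat :: "nat \<Rightarrow> (nat \<Rightarrow> nat \<Rightarrow> int) \<Rightarrow> int list \<Rightarrow> (nat \<Rightarrow> nat \<Rightarrow> int)" where
  "extend_mat d A \<beta> = (\<lambda>i k.
     if i < d \<and> k < d then A i k
     else if i < d \<and> k = d then \<beta> ! i
     else if i = d \<and> k < d then 0
     else 1)"

end

theory Submission
  imports Defs
begin

lemma idealD1: "idealizing d A \<Longrightarrow> i < d \<Longrightarrow> k < i \<Longrightarrow> A i k = 0"
  unfolding idealizing_def by auto
lemma idealD2: "idealizing d A \<Longrightarrow> i < d \<Longrightarrow> A i i \<noteq> 0"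
  unfolding idealizing_def by auto
lemma idealD3: "idealizing d A \<Longrightarrow> j + 1 < d \<Longrightarrow>
   \<exists>c :: nat \<Rightarrow> int. \<forall>r<d. (if r = 0 then 0 else A (r - 1) j) = (\<Sum>k\<le>j+1. c k * A r k)"
  unfolding idealizing_def by blast
lemma idealI: "(\<And>i k. i < d \<Longrightarrow> k < i \<Longrightarrow> A i k = 0) \<Longrightarrow> (\<And>i. i < d \<Longrightarrow> A i i \<noteq> 0) \<Longrightarrow>
  (\<And>j. j + 1 < d \<Longrightarrow>
   \<exists>c :: nat \<Rightarrow> int. \<forall>r<d. (if r = 0 then 0 else A (r - 1) j) = (\<Sum>k\<le>j+1. c k * A r k))
  \<Longrightarrow> idealizing d A"
  unfolding idealizing_def by auto

lemma idealizing_Suc_down: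
  assumes I: "idealizing (Suc d) A" shows "idealizing d A"
proof (rule idealI)
  fix i k assume "i < d" "k < i" thus "A i k = 0" using idealD1[OF I] by simp
next
  fix i assume "i < d" thus "A i i \<noteq> 0" using idealD2[OF I] by simp
next
  fix j assume j: "j + 1 < d"
  hence "j + 1 < Suc d" by simp
  then obtain c where "\<forall>r<Suc d. (if r = 0 then 0 else A (r - 1) j) = (\<Sum>k\<le>j+1. c k * A r k)"
    using idealD3[OF I] by blast
  thus "\<exists>c. \<forall>r<d. (if r = 0 then 0 else A (r - 1) j) = (\<Sum>k\<le>j+1. c k * A r k)" by auto
qed

lemma idealizing_dvd:
  assumes "idealizing (Suc n) A" "i < Suc n" "k < Suc n"
  shows "A n n dvd A i k"
  using assms
proof (induction n arbitrary: i k)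
  case 0
  then show ?case by simp
next
  case (Suc n)
  note I = Suc.prems(1)
  have IH: "\<And>i k. i < Suc n \<Longrightarrow> k < Suc n \<Longrightarrow> A n n dvd A i k"
    using Suc.IH idealizing_Suc_down[OF Suc.prems(1)] by blast
  have tri: "\<And>k. k < Suc n \<Longrightarrow> A (Suc n) k = 0" using idealD1[OF I] by simp
  have nz: "A n n \<noteq> 0" using idealD2[OF I] by simp
  obtain c where c: "\<forall>r<Suc (Suc n). (if r = 0 then 0 else A (r - 1) n) = (\<Sum>k\<le>n+1. c k * A r k)"
  proof -
    have "n + 1 < Suc (Suc n)" by simp
    thus ?thesis using idealD3[OF I] that by blast
  qed
  have sumsplit: "(\<Sum>k\<le>n+1. c k * A r k) = (\<Sum>k<Suc n. c k * A r k) + c (Suc n) * A r (Suc n)" for r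
    by (simp add: lessThan_Suc_atMost[symmetric])
  have "A n n = (\<Sum>k\<le>n+1. c k * A (Suc n) k)" using c[rule_format, of "Suc n"] by simp
  also have "\<dots> = c (Suc n) * A (Suc n) (Suc n)" using tri by (simp add: sumsplit)
  finally have ann: "A n n = c (Suc n) * A (Suc n) (Suc n)" .
  hence cnz: "c (Suc n) \<noteq> 0" using nz by auto
  show ?case
  proof (cases "i = Suc n")
    case True
    then show ?thesis using tri Suc.prems by (cases "k = Suc n") auto
  next
    case False
    hence i: "i < Suc n" using Suc.prems by auto
    show ?thesis
    proof (cases "k = Suc n")
      case False
      hence "k < Suc n" using Suc.prems by auto
      hence "A n n dvd A i k" using IH i by blast
      moreover have "A (Suc n) (Suc n) dvd A n n" using ann by simp
      ultimately show ?thesis by (meson dvd_trans)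
    next
      case True
      have lhs: "A n n dvd (if i = 0 then 0 else A (i - 1) n)" using IH i by auto
      have s: "A n n dvd (\<Sum>k<Suc n. c k * A i k)"
        by (rule dvd_sum) (use IH i in auto)
      have "(if i = 0 then 0 else A (i - 1) n) = (\<Sum>k<Suc n. c k * A i k) + c (Suc n) * A i (Suc n)"
        using c i sumsplit by auto
      hence "c (Suc n) * A i (Suc n) = (if i = 0 then 0 else A (i - 1) n) - (\<Sum>k<Suc n. c k * A i k)"
        by simp
      hence "A n n dvd c (Suc n) * A i (Suc n)" using lhs s by (simp add: dvd_diff)
      hence "c (Suc n) * A (Suc n) (Suc n) dvd c (Suc n) * A i (Suc n)" using ann by simp
      hence "A (Suc n) (Suc n) dvd A i (Suc n)" using cnz by simp
      then show ?thesis using True by simp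
    qed
  qed
qed

lemma card_X:
  fixes t m r0 :: int
  assumes t: "t > 0" and m: "m > 0"
  shows "int (card {x. 0 \<le> x \<and> x < t * m \<and> m dvd x - r0}) = t"
proof -
  define r where "r = r0 mod m"
  have r: "0 \<le> r" "r < m" using m by (auto simp: r_def)
  have eq: "{x. 0 \<le> x \<and> x < t * m \<and> m dvd x - r0} = (\<lambda>k. k * m + r) ` {0..<t}"
  proof (intro set_eqI iffI)
    fix x assume "x \<in> {x. 0 \<le> x \<and> x < t * m \<and> m dvd x - r0}"
    hence x: "0 \<le> x" "x < t * m" "m dvd x - r0" by auto
    have xm: "x mod m = r" using x(3) by (simp add: r_def mod_eq_dvd_iff)
    define k where "k = x div m"
    have xk: "x = k * m + r" using xm by (simp add: k_def) (metis div_mult_mod_eq)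
    have k0: "0 \<le> k" using x(1) m by (simp add: k_def pos_imp_zdiv_nonneg_iff)
    have "k * m < t * m" using xk x(2) r by linarith
    hence "k < t" using m by (simp add: mult_less_cancel_right)
    thus "x \<in> (\<lambda>k. k * m + r) ` {0..<t}" using xk k0 by auto
  next
    fix x assume "x \<in> (\<lambda>k. k * m + r) ` {0..<t}"
    then obtain k where k: "0 \<le> k" "k < t" and xk: "x = k * m + r" by auto
    have "0 \<le> k * m" using k m by simp
    hence x0: "0 \<le> x" using xk r by simp
    have "(k + 1) * m \<le> t * m" using k m by (intro mult_right_mono) auto
    hence x1: "x < t * m" using xk r by (simp add: algebra_simps)
    have "m dvd r - r0" by (simp add: r_def mod_eq_dvd_iff[symmetric])
    hence "m dvd k * m + (r - r0)" by simp
    hence x2: "m dvd x - r0" using xk by (simp add: algebra_simps)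
    show "x \<in> {x. 0 \<le> x \<and> x < t * m \<and> m dvd x - r0}" using x0 x1 x2 by simp
  qed
  have inj: "inj_on (\<lambda>k. k * m + r) {0..<t}" using m by (auto simp: inj_on_def)
  show ?thesis unfolding eq card_image[OF inj] using t by simp
qed

lemma count_lemma:
  fixes M :: "nat \<Rightarrow> nat \<Rightarrow> int" and t :: int and g :: "nat \<Rightarrow> int"
  assumes t: "t > 0"
  shows "(\<forall>i<d. M i i > 0) \<Longrightarrow> (\<forall>i<d. \<forall>k<i. M i k = 0) \<Longrightarrow>
    int (card {\<beta>. length \<beta> = d \<and> (\<forall>i<d. 0 \<le> \<beta>!i \<and> \<beta>!i < t * M i i) \<and>
       (\<exists>c::nat\<Rightarrow>int. \<forall>r<d. \<beta>!r - g r = (\<Sum>k<d. c k * M r k))}) = t ^ d"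
proof (induction d arbitrary: g)
  case 0
  have "{\<beta>::int list. length \<beta> = 0 \<and> (\<forall>i<0. 0 \<le> \<beta>!i \<and> \<beta>!i < t * M i i) \<and>
       (\<exists>c::nat\<Rightarrow>int. \<forall>r<0. \<beta>!r - g r = (\<Sum>k<0. c k * M r k))} = {[]}" by auto
  then show ?case by simp
next
  case (Suc n)
  define m where "m = M n n"
  have m: "m > 0" using Suc.prems by (simp add: m_def)
  have trin: "\<And>k. k < n \<Longrightarrow> M n k = 0" using Suc.prems by simp
  define S where "S h = {\<beta>. length \<beta> = n \<and> (\<forall>i<n. 0 \<le> \<beta>!i \<and> \<beta>!i < t * M i i) \<and>
       (\<exists>c::nat\<Rightarrow>int. \<forall>r<n. \<beta>!r - h r = (\<Sum>k<n. c k * M r k))}" for h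
  define G where "G x = (\<lambda>r. g r + ((x - g n) div m) * M r n)" for x
  define X where "X = {x. 0 \<le> x \<and> x < t * m \<and> m dvd x - g n}"
  have IH: "int (card (S h)) = t ^ n" for h
    using Suc.IH[of h] Suc.prems unfolding S_def by simp
  have finS: "finite (S h)" for h
  proof (rule ccontr)
    assume "infinite (S h)" hence "card (S h) = 0" by simp
    thus False using IH[of h] t by simp
  qed
  have cX: "int (card X) = t" unfolding X_def by (rule card_X[OF t m])
  have finX: "finite X"
  proof (rule ccontr)
    assume "infinite X" hence "card X = 0" by simp
    thus False using cX t by simp
  qed
  have eq: "{\<beta>. length \<beta> = Suc n \<and> (\<forall>i<Suc n. 0 \<le> \<beta>!i \<and> \<beta>!i < t * M i i) \<and>
       (\<exists>c::nat\<Rightarrow>int. \<forall>r<Suc n. \<beta>!r - g r = (\<Sum>k<Suc n. c k * M r k))}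
      = (\<Union>x\<in>X. (\<lambda>b. b @ [x]) ` S (G x))" (is "?L = ?R")
  proof (intro set_eqI iffI)
    fix \<beta> assume "\<beta> \<in> ?L"
    hence len: "length \<beta> = Suc n" and bd: "\<forall>i<Suc n. 0 \<le> \<beta>!i \<and> \<beta>!i < t * M i i"
      and "\<exists>c::nat\<Rightarrow>int. \<forall>r<Suc n. \<beta>!r - g r = (\<Sum>k<Suc n. c k * M r k)" by auto
    then obtain c :: "nat \<Rightarrow> int" where c: "\<forall>r<Suc n. \<beta>!r - g r = (\<Sum>k<Suc n. c k * M r k)" by blast
    define b where "b = butlast \<beta>"
    define x where "x = \<beta> ! n"
    have bx: "\<beta> = b @ [x]"
    proof -
      have "\<beta> \<noteq> []" using len by auto
      hence "\<beta> = butlast \<beta> @ [last \<beta>]" by simp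
      moreover have "last \<beta> = \<beta> ! n" using len \<open>\<beta> \<noteq> []\<close> by (simp add: last_conv_nth)
      ultimately show ?thesis by (simp add: b_def x_def)
    qed
    have lenb: "length b = n" using len by (simp add: b_def)
    have bi: "\<And>i. i < n \<Longrightarrow> b ! i = \<beta> ! i" using bx lenb by (simp add: nth_append)
    have "\<beta>!n - g n = (\<Sum>k<n. c k * M n k) + c n * m" using c by (simp add: m_def)
    also have "(\<Sum>k<n. c k * M n k) = 0" using trin by simp
    finally have xn: "x - g n = c n * m" by (simp add: x_def)
    hence dvdx: "m dvd x - g n" by simp
    have q: "(x - g n) div m = c n" using xn m by simp
    have xX: "x \<in> X" unfolding X_def using bd dvdx by (simp add: x_def m_def)
    have "b \<in> S (G x)" unfolding S_def
    proof (intro CollectI conjI allI impI)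
      show "length b = n" by (rule lenb)
    next
      fix i assume "i < n" thus "0 \<le> b ! i" using bd bi by simp
    next
      fix i assume "i < n" thus "b ! i < t * M i i" using bd bi by simp
    next
      show "\<exists>c::nat\<Rightarrow>int. \<forall>r<n. b!r - G x r = (\<Sum>k<n. c k * M r k)"
      proof (intro exI allI impI)
        fix r assume r: "r < n"
        have "\<beta>!r - g r = (\<Sum>k<n. c k * M r k) + c n * M r n" using c r by simp
        thus "b!r - G x r = (\<Sum>k<n. c k * M r k)" using bi[OF r] q by (simp add: G_def)
      qed
    qed
    thus "\<beta> \<in> ?R" using xX bx by blast
  next
    fix \<beta> assume "\<beta> \<in> ?R"
    then obtain x b where xX: "x \<in> X" and bS: "b \<in> S (G x)" and bx: "\<beta> = b @ [x]" by blast
    have lenb: "length b = n" and bdb: "\<forall>i<n. 0 \<le> b!i \<and> b!i < t * M i i" using bS by (auto simp: S_def)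
    obtain c' :: "nat \<Rightarrow> int" where c': "\<forall>r<n. b!r - G x r = (\<Sum>k<n. c' k * M r k)"
      using bS unfolding S_def by blast
    have x: "0 \<le> x" "x < t * m" "m dvd x - g n" using xX by (auto simp: X_def)
    define q where "q = (x - g n) div m"
    have qm: "q * m = x - g n" using x(3) by (simp add: q_def)
    define c where "c = c'(n := q)"
    have sc: "(\<Sum>k<n. c k * M r k) = (\<Sum>k<n. c' k * M r k)" for r
      by (rule sum.cong) (auto simp: c_def)
    show "\<beta> \<in> ?L"
    proof (intro CollectI conjI allI impI)
      show "length \<beta> = Suc n" using bx lenb by simp
    next
      fix i assume "i < Suc n"
      thus "0 \<le> \<beta> ! i" using bx lenb bdb x by (cases "i < n") (auto simp: nth_append)
    next
      fix i assume "i < Suc n"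
      show "\<beta> ! i < t * M i i"
      proof (cases "i < n")
        case True thus ?thesis using bx lenb bdb by (simp add: nth_append)
      next
        case False hence "i = n" using \<open>i < Suc n\<close> by simp
        moreover have "\<beta> ! n = x" using bx lenb by (metis nth_append_length)
        ultimately show ?thesis using x by (simp add: m_def)
      qed
    next
      show "\<exists>c::nat\<Rightarrow>int. \<forall>r<Suc n. \<beta>!r - g r = (\<Sum>k<Suc n. c k * M r k)"
      proof (intro exI allI impI)
        fix r assume r: "r < Suc n"
        have s: "(\<Sum>k<Suc n. c k * M r k) = (\<Sum>k<n. c' k * M r k) + q * M r n"
          by (simp add: sc c_def)
        show "\<beta>!r - g r = (\<Sum>k<Suc n. c k * M r k)"
        proof (cases "r < n")
          case True
          have "b!r - G x r = (\<Sum>k<n. c' k * M r k)" using c' True by simp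
          hence "b!r - g r = (\<Sum>k<n. c' k * M r k) + q * M r n" by (simp add: G_def q_def)
          moreover have "\<beta> ! r = b ! r" using bx lenb True by (simp add: nth_append)
          ultimately show ?thesis using s by simp
        next
          case False
          hence rn: "r = n" using r by simp
          have "(\<Sum>k<n. c' k * M n k) = 0" using trin by simp
          moreover have "\<beta> ! n = x" using bx lenb by (metis nth_append_length)
          ultimately show ?thesis using s rn qm by (simp add: m_def)
        qed
      qed
    qed
  qed
  have disj: "\<forall>x\<in>X. \<forall>y\<in>X. x \<noteq> y \<longrightarrow> (\<lambda>b. b @ [x]) ` S (G x) \<inter> (\<lambda>b. b @ [y]) ` S (G y) = {}"
    by auto
  have inj: "inj_on (\<lambda>b. b @ [x]) A" for x :: int and A by (auto simp: inj_on_def)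
  have "card ?R = (\<Sum>x\<in>X. card ((\<lambda>b. b @ [x]) ` S (G x)))"
    by (rule card_UN_disjoint[OF finX]) (use finS disj in auto)
  also have "\<dots> = (\<Sum>x\<in>X. card (S (G x)))" using card_image[OF inj] by simp
  finally have "int (card ?R) = (\<Sum>x\<in>X. int (card (S (G x))))" by simp
  also have "\<dots> = (\<Sum>x\<in>X. t ^ n)" using IH by simp
  also have "\<dots> = int (card X) * t ^ n" by simp
  also have "\<dots> = t ^ Suc n" using cX by simp
  finally show ?case unfolding eq .
qed

lemma ext_iff:
  fixes A :: "nat \<Rightarrow> nat \<Rightarrow> int" and \<beta> :: "int list"
  assumes R: "reduced_idealizing (Suc n) A" and len: "length \<beta> = Suc n"
  shows "reduced_idealizing (Suc n + 1) (extend_mat (Suc n) A \<beta>) \<longleftrightarrow>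
    ((\<forall>i<Suc n. 0 \<le> \<beta>!i \<and> \<beta>!i < A n n * (A i i div A n n)) \<and>
     (\<exists>c::nat\<Rightarrow>int. \<forall>r<Suc n. \<beta>!r - (if r = 0 then 0 else A (r-1) n) div A n n
         = (\<Sum>k<Suc n. c k * (A r k div A n n))))"
proof -
  define d where "d = Suc n"
  define a where "a = A n n"
  define E where "E = extend_mat (Suc n) A \<beta>"
  define v where "v r = (if r = 0 then 0 else A (r-1) n)" for r
  have I: "idealizing d A" using R by (simp add: reduced_idealizing_def d_def)
  have pos: "\<And>i. i < d \<Longrightarrow> A i i > 0" using R by (simp add: reduced_idealizing_def d_def)
  have red: "\<And>i k. i < d \<Longrightarrow> k < d \<Longrightarrow> i < k \<Longrightarrow> 0 \<le> A i k \<and> A i k \<le> A i i - 1"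
    using R by (simp add: reduced_idealizing_def d_def)
  have a0: "a > 0" using pos[of n] by (simp add: a_def d_def)
  have dv: "\<And>i k. i < d \<Longrightarrow> k < d \<Longrightarrow> a dvd A i k"
    using idealizing_dvd[OF I[unfolded d_def]] by (simp add: a_def d_def)
  have AM: "\<And>i k. i < d \<Longrightarrow> k < d \<Longrightarrow> a * (A i k div a) = A i k"
    using dv by simp
  have vd: "\<And>r. r < d \<Longrightarrow> a * (v r div a) = v r"
  proof -
    fix r assume "r < d"
    have "a dvd v r" using dv[of "r - 1" n] \<open>r < d\<close> by (auto simp: v_def d_def)
    thus "a * (v r div a) = v r" by simp
  qed
  have E1: "\<And>i k. i < d \<Longrightarrow> k < d \<Longrightarrow> E i k = A i k" by (simp add: E_def extend_mat_def d_def)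
  have E2: "\<And>i. i < d \<Longrightarrow> E i d = \<beta> ! i" by (simp add: E_def extend_mat_def d_def)
  have E3: "\<And>k. k < d \<Longrightarrow> E d k = 0" by (simp add: E_def extend_mat_def d_def)
  have E4: "E d d = 1" by (simp add: E_def extend_mat_def d_def)
  have sumd: "(\<Sum>k\<le>d. f k) = (\<Sum>k<d. f k) + f d" for f :: "nat \<Rightarrow> int"
    by (simp add: lessThan_Suc_atMost[symmetric])
  have sumdist: "(\<Sum>k<d. c k * A r k) = a * (\<Sum>k<d. c k * (A r k div a))" if "r < d" for c r
  proof -
    have "(\<Sum>k<d. c k * A r k) = (\<Sum>k<d. a * (c k * (A r k div a)))"
      by (rule sum.cong[OF refl]) (metis AM lessThan_iff that mult.left_commute)
    thus ?thesis by (simp add: sum_distrib_left)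
  qed
  have rowd: "(\<Sum>k<d. c k * E d k) = 0" for c by (simp add: E3)
  have rowr: "(\<Sum>k<d. c k * E r k) = (\<Sum>k<d. c k * A r k)" if "r < d" for c r
    by (rule sum.cong) (simp_all add: E1 that)
  have key: "(\<exists>c::nat\<Rightarrow>int. \<forall>r<d+1. (if r = 0 then 0 else E (r - 1) n) = (\<Sum>k\<le>n+1. c k * E r k))
     \<longleftrightarrow> (\<exists>c::nat\<Rightarrow>int. \<forall>r<d. \<beta>!r - v r div a = (\<Sum>k<d. c k * (A r k div a)))"
  proof
    assume "\<exists>c::nat\<Rightarrow>int. \<forall>r<d+1. (if r = 0 then 0 else E (r - 1) n) = (\<Sum>k\<le>n+1. c k * E r k)"
    then obtain c :: "nat \<Rightarrow> int" where c: "\<forall>r<d+1. (if r = 0 then 0 else E (r - 1) n) = (\<Sum>k\<le>d. c k * E r k)"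
      by (auto simp: d_def)
    have "(if d = 0 then 0 else E (d - 1) n) = (\<Sum>k\<le>d. c k * E d k)" using c by simp
    moreover have "(if d = 0 then 0 else E (d - 1) n) = a"
    proof -
      have "d - 1 = n" "n < d" "d \<noteq> 0" by (simp_all add: d_def)
      thus ?thesis by (simp add: E1 a_def)
    qed
    moreover have "(\<Sum>k\<le>d. c k * E d k) = c d" by (simp add: sumd rowd E4)
    ultimately have cd: "a = c d" by simp
    show "\<exists>c::nat\<Rightarrow>int. \<forall>r<d. \<beta>!r - v r div a = (\<Sum>k<d. c k * (A r k div a))"
    proof (intro exI allI impI)
      fix r assume r: "r < d"
      have "(if r = 0 then 0 else E (r - 1) n) = (\<Sum>k\<le>d. c k * E r k)" using c r by simp
      moreover have "(if r = 0 then 0 else E (r - 1) n) = v r" using r by (auto simp: v_def E1 d_def)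
      ultimately have "v r = (\<Sum>k<d. c k * A r k) + a * \<beta>!r" using r by (simp add: sumd rowr E2 cd)
      hence "a * (v r div a) = a * ((\<Sum>k<d. c k * (A r k div a)) + \<beta>!r)"
        using vd[OF r] sumdist[OF r] by (simp add: algebra_simps)
      hence "v r div a = (\<Sum>k<d. c k * (A r k div a)) + \<beta>!r" using a0 by simp
      hence "\<beta>!r - v r div a = (\<Sum>k<d. (- c k) * (A r k div a))" by (simp add: sum_negf)
      thus "\<beta>!r - v r div a = (\<Sum>k<d. ((\<lambda>k. - c k) k) * (A r k div a))" by simp
    qed
  next
    assume "\<exists>c::nat\<Rightarrow>int. \<forall>r<d. \<beta>!r - v r div a = (\<Sum>k<d. c k * (A r k div a))"
    then obtain c0 :: "nat \<Rightarrow> int" where c0: "\<forall>r<d. \<beta>!r - v r div a = (\<Sum>k<d. c0 k * (A r k div a))" by blast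
    define c where "c = (\<lambda>k. - c0 k)(d := a)"
    have sc: "(\<Sum>k<d. c k * f k) = - (\<Sum>k<d. c0 k * f k)" for f :: "nat \<Rightarrow> int"
    proof -
      have "(\<Sum>k<d. c k * f k) = (\<Sum>k<d. - (c0 k * f k))" by (rule sum.cong) (auto simp: c_def)
      thus ?thesis by (simp add: sum_negf)
    qed
    show "\<exists>c::nat\<Rightarrow>int. \<forall>r<d+1. (if r = 0 then 0 else E (r - 1) n) = (\<Sum>k\<le>n+1. c k * E r k)"
    proof (intro exI allI impI)
      fix r assume r: "r < d + 1"
      have nd: "n + 1 = d" by (simp add: d_def)
      show "(if r = 0 then 0 else E (r - 1) n) = (\<Sum>k\<le>n+1. c k * E r k)"
      proof (cases "r < d")
        case True
        have lhs: "(if r = 0 then 0 else E (r - 1) n) = v r" using True by (auto simp: v_def E1 d_def)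
        have "(\<Sum>k\<le>n+1. c k * E r k) = (\<Sum>k<d. c k * A r k) + a * \<beta>!r"
        proof -
          have "c d = a" by (simp add: c_def)
          thus ?thesis unfolding nd sumd rowr[OF True] using True by (simp add: E2)
        qed
        also have "(\<Sum>k<d. c k * A r k) = - (a * (\<Sum>k<d. c0 k * (A r k div a)))"
          unfolding sc[of "\<lambda>k. A r k"] sumdist[OF True] ..
        also have "(\<Sum>k<d. c0 k * (A r k div a)) = \<beta>!r - v r div a" using c0 True by simp
        finally have "(\<Sum>k\<le>n+1. c k * E r k) = a * (v r div a)" by (simp add: algebra_simps)
        then show ?thesis using lhs vd[OF True] by simp
      next
        case False
        hence rd: "r = d" using r by simp
        have "(\<Sum>k\<le>n+1. c k * E r k) = a" 
        proof -
          have "c d = a" by (simp add: c_def)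
          thus ?thesis unfolding nd sumd rd rowd by (simp add: E4)
        qed
        moreover have "(if r = 0 then 0 else E (r - 1) n) = a" using rd by (simp add: d_def E1 a_def)
        ultimately show ?thesis by simp
      qed
    qed
  qed
  have idE: "idealizing (d+1) E \<longleftrightarrow> (\<exists>c::nat\<Rightarrow>int. \<forall>r<d+1. (if r = 0 then 0 else E (r - 1) n) = (\<Sum>k\<le>n+1. c k * E r k))"
  proof
    assume "idealizing (d+1) E"
    moreover have "n + 1 < d + 1" by (simp add: d_def)
    ultimately show "\<exists>c::nat\<Rightarrow>int. \<forall>r<d+1. (if r = 0 then 0 else E (r - 1) n) = (\<Sum>k\<le>n+1. c k * E r k)"
      by (rule idealD3)
  next
    assume H: "\<exists>c::nat\<Rightarrow>int. \<forall>r<d+1. (if r = 0 then 0 else E (r - 1) n) = (\<Sum>k\<le>n+1. c k * E r k)"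
    show "idealizing (d+1) E"
    proof (rule idealI)
      fix i k assume "i < d + 1" "k < i"
      show "E i k = 0"
      proof (cases "i < d")
        case True thus ?thesis using \<open>k < i\<close> by (simp add: E1 idealD1[OF I])
      next
        case False hence "i = d" using \<open>i < d + 1\<close> by simp
        thus ?thesis using \<open>k < i\<close> by (simp add: E3)
      qed
    next
      fix i assume "i < d + 1"
      show "E i i \<noteq> 0"
      proof (cases "i < d")
        case True thus ?thesis by (simp add: E1 idealD2[OF I])
      next
        case False hence "i = d" using \<open>i < d + 1\<close> by simp
        thus ?thesis by (simp add: E4)
      qed
    next
      fix j assume j: "j + 1 < d + 1"
      show "\<exists>c::nat\<Rightarrow>int. \<forall>r<d+1. (if r = 0 then 0 else E (r - 1) j) = (\<Sum>k\<le>j+1. c k * E r k)"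
      proof (cases "j = n")
        case True thus ?thesis using H by blast
      next
        case False
        hence j1: "j + 1 < d" using j by (simp add: d_def)
        then obtain c :: "nat \<Rightarrow> int" where c: "\<forall>r<d. (if r = 0 then 0 else A (r - 1) j) = (\<Sum>k\<le>j+1. c k * A r k)"
          using idealD3[OF I] by blast
        show ?thesis
        proof (intro exI allI impI)
          fix r assume r: "r < d + 1"
          show "(if r = 0 then 0 else E (r - 1) j) = (\<Sum>k\<le>j+1. c k * E r k)"
          proof (cases "r < d")
            case True
            have "(\<Sum>k\<le>j+1. c k * E r k) = (\<Sum>k\<le>j+1. c k * A r k)"
              by (rule sum.cong) (use True j1 in \<open>auto simp: E1\<close>)
            moreover have "(if r = 0 then 0 else E (r - 1) j) = (if r = 0 then 0 else A (r - 1) j)"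
              using True j1 by (auto simp: E1)
            ultimately show ?thesis using c True by simp
          next
            case False
            hence rd: "r = d" using r by simp
            have "(\<Sum>k\<le>j+1. c k * E r k) = 0"
              by (rule sum.neutral) (use rd j1 in \<open>auto simp: E3\<close>)
            moreover have "E (d - 1) j = 0" using j1 idealD1[OF I, of n j] by (simp add: E1 d_def)
            ultimately show ?thesis using rd by (simp add: d_def)
          qed
        qed
      qed
    qed
  qed
  have rest: "((\<forall>i<d+1. E i i > 0) \<and> (\<forall>i<d+1. \<forall>k<d+1. i < k \<longrightarrow> 0 \<le> E i k \<and> E i k \<le> E i i - 1))
     \<longleftrightarrow> (\<forall>i<d. 0 \<le> \<beta>!i \<and> \<beta>!i < a * (A i i div a))"
  proof
    assume H: "(\<forall>i<d+1. E i i > 0) \<and> (\<forall>i<d+1. \<forall>k<d+1. i < k \<longrightarrow> 0 \<le> E i k \<and> E i k \<le> E i i - 1)"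
    show "\<forall>i<d. 0 \<le> \<beta>!i \<and> \<beta>!i < a * (A i i div a)"
    proof (intro allI impI)
      fix i assume i: "i < d"
      have "0 \<le> E i d \<and> E i d \<le> E i i - 1" using H i by simp
      thus "0 \<le> \<beta>!i \<and> \<beta>!i < a * (A i i div a)" using i by (simp add: E1 E2 AM)
    qed
  next
    assume H: "\<forall>i<d. 0 \<le> \<beta>!i \<and> \<beta>!i < a * (A i i div a)"
    have P1: "\<forall>i<d+1. E i i > 0"
    proof (intro allI impI)
      fix i assume i1: "i < d + 1" show "E i i > 0"
      proof (cases "i < d")
        case True thus ?thesis by (simp add: E1 pos)
      next
        case False hence "i = d" using i1 by simp
        thus ?thesis by (simp add: E4)
      qed
    qed
    have P2: "\<forall>i<d+1. \<forall>k<d+1. i < k \<longrightarrow> 0 \<le> E i k \<and> E i k \<le> E i i - 1"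
    proof (intro allI impI)
      fix i k assume ik: "i < d + 1" "k < d + 1" "i < k"
      hence i: "i < d" by simp
      show "0 \<le> E i k \<and> E i k \<le> E i i - 1"
      proof (cases "k < d")
        case True thus ?thesis using red[OF i True ik(3)] i by (simp add: E1)
      next
        case False hence "k = d" using ik by simp
        thus ?thesis using H i by (simp add: E1 E2 AM)
      qed
    qed
    show "(\<forall>i<d+1. E i i > 0) \<and> (\<forall>i<d+1. \<forall>k<d+1. i < k \<longrightarrow> 0 \<le> E i k \<and> E i k \<le> E i i - 1)"
      using P1 P2 by blast
  qed
  have "reduced_idealizing (Suc n + 1) (extend_mat (Suc n) A \<beta>) \<longleftrightarrow>
     idealizing (d+1) E \<and> ((\<forall>i<d+1. E i i > 0) \<and> (\<forall>i<d+1. \<forall>k<d+1. i < k \<longrightarrow> 0 \<le> E i k \<and> E i k \<le> E i i - 1))"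
    unfolding reduced_idealizing_def E_def d_def by simp
  also have "\<dots> \<longleftrightarrow> (\<forall>i<d. 0 \<le> \<beta>!i \<and> \<beta>!i < a * (A i i div a)) \<and>
     (\<exists>c::nat\<Rightarrow>int. \<forall>r<d. \<beta>!r - v r div a = (\<Sum>k<d. c k * (A r k div a)))"
    using idE key rest by blast
  finally show ?thesis by (simp add: d_def a_def v_def)
qed

theorem lemma3p1:
  fixes d :: nat and A :: "nat \<Rightarrow> nat \<Rightarrow> int"
  assumes "d \<ge> 1"
    and "reduced_idealizing d A"
  shows "int (card {\<beta> :: int list. length \<beta> = d \<and>
                     reduced_idealizing (d + 1) (extend_mat d A \<beta>)})
         = A (d - 1) (d - 1) ^ d"
proof -
  obtain n where dn: "d = Suc n" using assms(1) by (cases d) auto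
  have R: "reduced_idealizing (Suc n) A" using assms(2) dn by simp
  have I: "idealizing (Suc n) A" using R by (simp add: reduced_idealizing_def)
  have pos: "\<And>i. i < Suc n \<Longrightarrow> A i i > 0" using R by (simp add: reduced_idealizing_def)
  define a where "a = A n n"
  have a0: "a > 0" using pos[of n] by (simp add: a_def)
  have dv: "\<And>i k. i < Suc n \<Longrightarrow> k < Suc n \<Longrightarrow> a dvd A i k"
    using idealizing_dvd[OF I] by (simp add: a_def)
  define M where "M r k = A r k div a" for r k
  define g where "g r = (if r = 0 then 0 else A (r-1) n) div a" for r
  have Mpos: "\<forall>i<Suc n. M i i > 0"
  proof (intro allI impI)
    fix i assume i: "i < Suc n"
    have "a * M i i = A i i" using dv[OF i i] by (simp add: M_def)
    thus "M i i > 0" using pos[OF i] a0 by (metis zero_less_mult_pos)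
  qed
  have Mtri: "\<forall>i<Suc n. \<forall>k<i. M i k = 0" using idealD1[OF I] by (simp add: M_def)
  have "{\<beta> :: int list. length \<beta> = d \<and> reduced_idealizing (d + 1) (extend_mat d A \<beta>)}
     = {\<beta>. length \<beta> = Suc n \<and> (\<forall>i<Suc n. 0 \<le> \<beta>!i \<and> \<beta>!i < a * M i i) \<and>
       (\<exists>c::nat\<Rightarrow>int. \<forall>r<Suc n. \<beta>!r - g r = (\<Sum>k<Suc n. c k * M r k))}"
    using ext_iff[OF R] unfolding dn M_def g_def a_def by blast
  also have "int (card \<dots>) = a ^ Suc n" by (rule count_lemma[OF a0 Mpos Mtri])
  finally show ?thesis by (simp add: dn a_def)
qed

end
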